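(* Let $G$ be a two-player stage game and let $I=\{(i,j)\in A_1\times A_2: u_2(i,j)=\max_{j'\in A_2}u_2(i,j')\}$. Suppose that (1) $|V_1^{m,m}|>1$ and $|V_2^{m,m}|=1$; (2) there do not exist $\hat a_1\in A_1$, $\hat\sigma_2\in\Delta A_2$, $a_1'\in A_1$ with $u_1(\hat a_1,\hat\sigma_2)<u_1(a_1',\hat\sigma_2)$ and $\hat\sigma_2$ a best response to $\hat a_1$; (3) there do not exist $a_1\in A_1$ and $a_2,a_2'\in A_2$ with $a_2\ne a_2'$ such that both $a_2$ and $a_2'$ are best responses to $a_1$. Then: (a) $I\subseteq\mathrm{Nash}^{m,m}(G)$; (b) for each $i\in A_1$ there is a unique $j\in A_2$ with $(i,j)\in I$; (c) there exists $b\in\mathbb{R}$ such that $u_2(i,j)=b$ for all $(i,j)\in I$ and $u_2(i',j')<b$ for all $(i',j')\in(A_1\times A_2)\setminus I$; (d) there exist $(i,j),(i',j')\in I$ with $u_1(i,j)\ne u_1(i',j')$, $i\ne i'$ and $j\ne j'$.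
   Context: A two-player stage game $G$ consists of finite nonempty action sets $A_1,A_2$ and payoff functions $u_1,u_2:A_1\times A_2\to\mathbb{R}$, extended to mixed strategies $\sigma_i\in\Delta A_i$ by expectation. A (mixed) strategy is a best response to the opponent's strategy if it maximizes expected payoff against it. $\mathrm{Nash}^{m,m}(G)$ is the set of mixed-strategy Nash equilibria of $G$ (pure profiles viewed as degenerate mixed profiles), and $V_i^{m,m}=\{u_i(\sigma):\sigma\in\mathrm{Nash}^{m,m}(G)\}$. *)

theory Defs
  imports Complex_Main
begin

definition mixed :: "'a set \<Rightarrow> ('a \<Rightarrow> real) \<Rightarrow> bool" where
  "mixed A \<sigma> \<longleftrightarrow> (\<forall>a. 0 \<le> \<sigma> a) \<and> (\<forall>a. a \<notin> A \<longrightarrow> \<sigma> a = 0) \<and> (\<Sum>a\<in>A. \<sigma> a) = 1"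

definition pure :: "'a \<Rightarrow> 'a \<Rightarrow> real" where
  "pure a = (\<lambda>x. if x = a then 1 else 0)"

definition expu :: "'a set \<Rightarrow> 'b set \<Rightarrow> ('a \<Rightarrow> 'b \<Rightarrow> real) \<Rightarrow> ('a \<Rightarrow> real) \<Rightarrow> ('b \<Rightarrow> real) \<Rightarrow> real" where
  "expu A1 A2 u \<sigma>1 \<sigma>2 = (\<Sum>a1\<in>A1. \<Sum>a2\<in>A2. \<sigma>1 a1 * \<sigma>2 a2 * u a1 a2)"

definition best_resp1 where
  "best_resp1 A1 A2 u1 \<sigma>1 \<sigma>2 \<longleftrightarrow> mixed A1 \<sigma>1 \<and>
     (\<forall>\<tau>. mixed A1 \<tau> \<longrightarrow> expu A1 A2 u1 \<tau> \<sigma>2 \<le> expu A1 A2 u1 \<sigma>1 \<sigma>2)"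

definition best_resp2 where
  "best_resp2 A1 A2 u2 \<sigma>1 \<sigma>2 \<longleftrightarrow> mixed A2 \<sigma>2 \<and>
     (\<forall>\<tau>. mixed A2 \<tau> \<longrightarrow> expu A1 A2 u2 \<sigma>1 \<tau> \<le> expu A1 A2 u2 \<sigma>1 \<sigma>2)"

definition nash_mm where
  "nash_mm A1 A2 u1 u2 = {(\<sigma>1, \<sigma>2). mixed A1 \<sigma>1 \<and> mixed A2 \<sigma>2 \<and>
      best_resp1 A1 A2 u1 \<sigma>1 \<sigma>2 \<and> best_resp2 A1 A2 u2 \<sigma>1 \<sigma>2}"

definition V1_mm where
  "V1_mm A1 A2 u1 u2 = (\<lambda>(\<sigma>1, \<sigma>2). expu A1 A2 u1 \<sigma>1 \<sigma>2) ` nash_mm A1 A2 u1 u2"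

definition V2_mm where
  "V2_mm A1 A2 u1 u2 = (\<lambda>(\<sigma>1, \<sigma>2). expu A1 A2 u2 \<sigma>1 \<sigma>2) ` nash_mm A1 A2 u1 u2"

definition Iset where
  "Iset A1 A2 u2 = {(i, j). i \<in> A1 \<and> j \<in> A2 \<and> u2 i j = (MAX j'\<in>A2. u2 i j')}"

end

theory Submission
  imports Defs
begin

lemma mixed_pure: "a \<in> A \<Longrightarrow> finite A \<Longrightarrow> mixed A (pure a)"
  unfolding mixed_def pure_def by auto

lemma sum_pure: assumes "finite A" "a \<in> A" shows "(\<Sum>x\<in>A. pure a x * f x) = f a"
proof -
  have "(\<Sum>x\<in>A. pure a x * f x) = (\<Sum>x\<in>A. if x = a then f x else 0)"
    by (rule sum.cong) (auto simp: pure_def)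
  also have "\<dots> = f a" using assms by (simp add: sum.delta)
  finally show ?thesis .
qed

lemma expu_pure1: "finite A1 \<Longrightarrow> i \<in> A1 \<Longrightarrow>
   expu A1 A2 u (pure i) \<sigma> = (\<Sum>a2\<in>A2. \<sigma> a2 * u i a2)"
proof -
  assume f: "finite A1" and i: "i \<in> A1"
  have "expu A1 A2 u (pure i) \<sigma> = (\<Sum>a1\<in>A1. pure i a1 * (\<Sum>a2\<in>A2. \<sigma> a2 * u a1 a2))"
    unfolding expu_def by (simp add: sum_distrib_left mult.assoc)
  also have "\<dots> = (\<Sum>a2\<in>A2. \<sigma> a2 * u i a2)" using sum_pure[OF f i, of "\<lambda>a1. \<Sum>a2\<in>A2. \<sigma> a2 * u a1 a2"] by simp
  finally show ?thesis .
qed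

lemma expu_pure2: "finite A2 \<Longrightarrow> j \<in> A2 \<Longrightarrow>
   expu A1 A2 u \<sigma> (pure j) = (\<Sum>a1\<in>A1. \<sigma> a1 * u a1 j)"
proof -
  assume f: "finite A2" and j: "j \<in> A2"
  have "expu A1 A2 u \<sigma> (pure j) = (\<Sum>a1\<in>A1. (\<Sum>a2\<in>A2. pure j a2 * (\<sigma> a1 * u a1 a2)))"
    unfolding expu_def by (simp add: mult.assoc mult.left_commute)
  also have "\<dots> = (\<Sum>a1\<in>A1. \<sigma> a1 * u a1 j)" using sum_pure[OF f j] by simp
  finally show ?thesis .
qed

lemma convex_le: assumes "mixed A \<sigma>" "\<And>a. a \<in> A \<Longrightarrow> f a \<le> M"
  shows "(\<Sum>a\<in>A. \<sigma> a * f a) \<le> M"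
proof -
  have "(\<Sum>a\<in>A. \<sigma> a * f a) \<le> (\<Sum>a\<in>A. \<sigma> a * M)"
    apply (rule sum_mono) using assms unfolding mixed_def by (simp add: mult_left_mono)
  also have "\<dots> = M" using assms(1) unfolding mixed_def by (simp add: sum_distrib_right[symmetric])
  finally show ?thesis .
qed

lemma mixed_pos: assumes "mixed A \<sigma>" obtains a where "a \<in> A" "\<sigma> a > 0"
proof -
  have "(\<Sum>a\<in>A. \<sigma> a) = 1" using assms unfolding mixed_def by auto
  then have "\<exists>a\<in>A. \<sigma> a \<noteq> 0" by (metis sum.neutral zero_neq_one)
  then show ?thesis using assms that unfolding mixed_def by (metis less_eq_real_def)
qed

theorem mainTheorem3:
  fixes A1 :: "'a set" and A2 :: "'b set" and u1 u2 :: "'a \<Rightarrow> 'b \<Rightarrow> real"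
  assumes fin1: "finite A1" and ne1: "A1 \<noteq> {}"
    and fin2: "finite A2" and ne2: "A2 \<noteq> {}"
    and h1: "\<exists>x\<in>V1_mm A1 A2 u1 u2. \<exists>y\<in>V1_mm A1 A2 u1 u2. x \<noteq> y"
    and h1': "\<exists>v. V2_mm A1 A2 u1 u2 = {v}"
    and h2: "\<not> (\<exists>a1h \<in> A1. \<exists>\<sigma>2h. \<exists>a1' \<in> A1.
               expu A1 A2 u1 (pure a1h) \<sigma>2h < expu A1 A2 u1 (pure a1') \<sigma>2h
             \<and> best_resp2 A1 A2 u2 (pure a1h) \<sigma>2h)"
    and h3: "\<not> (\<exists>a1 \<in> A1. \<exists>a2 \<in> A2. \<exists>a2' \<in> A2. a2 \<noteq> a2'
             \<and> best_resp2 A1 A2 u2 (pure a1) (pure a2)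
             \<and> best_resp2 A1 A2 u2 (pure a1) (pure a2'))"
  shows "(\<forall>(i, j) \<in> Iset A1 A2 u2. (pure i, pure j) \<in> nash_mm A1 A2 u1 u2)
    \<and> (\<forall>i \<in> A1. \<exists>!j. j \<in> A2 \<and> (i, j) \<in> Iset A1 A2 u2)
    \<and> (\<exists>b::real. (\<forall>(i, j) \<in> Iset A1 A2 u2. u2 i j = b)
         \<and> (\<forall>(i', j') \<in> (A1 \<times> A2) - Iset A1 A2 u2. u2 i' j' < b))
    \<and> (\<exists>(i, j) \<in> Iset A1 A2 u2. \<exists>(i', j') \<in> Iset A1 A2 u2.
         u1 i j \<noteq> u1 i' j' \<and> i \<noteq> i' \<and> j \<noteq> j')"
proof -
  define m where "m i = (MAX j'\<in>A2. u2 i j')" for i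
  define I where "I = Iset A1 A2 u2"
  have I_iff: "(i,j) \<in> I \<longleftrightarrow> i \<in> A1 \<and> j \<in> A2 \<and> u2 i j = m i" for i j
    unfolding I_def Iset_def m_def by auto
  have m_ge: "u2 i j \<le> m i" if "j \<in> A2" for i j
    unfolding m_def using fin2 that by auto
  have m_ex: "\<exists>j\<in>A2. u2 i j = m i" for i
    unfolding m_def using fin2 ne2 by (metis (mono_tags, lifting) Max_in finite_imageI image_iff image_is_empty)
  have br_I: "best_resp2 A1 A2 u2 (pure i) (pure j)" if "(i,j) \<in> I" for i j
  proof -
    have i: "i \<in> A1" and j: "j \<in> A2" and e: "u2 i j = m i" using that I_iff by auto
    show ?thesis unfolding best_resp2_def
    proof (intro conjI allI impI)
      show "mixed A2 (pure j)" using mixed_pure[OF j fin2] .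
      fix \<tau> assume "mixed A2 \<tau>"
      then have "(\<Sum>a2\<in>A2. \<tau> a2 * u2 i a2) \<le> m i" by (rule convex_le) (rule m_ge)
      then show "expu A1 A2 u2 (pure i) \<tau> \<le> expu A1 A2 u2 (pure i) (pure j)"
        using expu_pure1[OF fin1 i, of A2 u2 \<tau>] expu_pure1[OF fin1 i, of A2 u2 "pure j"] sum_pure[OF fin2 j, of "u2 i"] e by simp
    qed
  qed
  have h2': "u1 a j \<le> u1 i j" if "(i,j) \<in> I" "a \<in> A1" for i j a
  proof -
    have i: "i \<in> A1" and j: "j \<in> A2" using that I_iff by auto
    have "\<not> expu A1 A2 u1 (pure i) (pure j) < expu A1 A2 u1 (pure a) (pure j)"
      using h2 br_I[OF that(1)] i that(2) by blast
    then show ?thesis using expu_pure1[OF fin1 i, of A2 u1 "pure j"] expu_pure1[OF fin1 that(2), of A2 u1 "pure j"] sum_pure[OF fin2 j, of "u1 i"] sum_pure[OF fin2 j, of "u1 a"] by simp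
  qed
  have nashI: "(pure i, pure j) \<in> nash_mm A1 A2 u1 u2" if "(i,j) \<in> I" for i j
  proof -
    have i: "i \<in> A1" and j: "j \<in> A2" using that I_iff by auto
    have "best_resp1 A1 A2 u1 (pure i) (pure j)" unfolding best_resp1_def
    proof (intro conjI allI impI)
      show "mixed A1 (pure i)" using mixed_pure[OF i fin1] .
      fix \<tau> assume "mixed A1 \<tau>"
      then have "(\<Sum>a\<in>A1. \<tau> a * u1 a j) \<le> u1 i j" by (rule convex_le) (rule h2'[OF that])
      then show "expu A1 A2 u1 \<tau> (pure j) \<le> expu A1 A2 u1 (pure i) (pure j)"
        using expu_pure2[OF fin2 j, of A1 u1 \<tau>] expu_pure1[OF fin1 i, of A2 u1 "pure j"] sum_pure[OF fin2 j, of "u1 i"] by simp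
    qed
    then show ?thesis unfolding nash_mm_def using br_I[OF that] mixed_pure[OF i fin1] mixed_pure[OF j fin2] by auto
  qed
  have uniq: "j = j'" if "(i,j) \<in> I" "(i,j') \<in> I" for i j j'
    using h3 br_I[OF that(1)] br_I[OF that(2)] that I_iff by blast
  have partB: "\<forall>i \<in> A1. \<exists>!j. j \<in> A2 \<and> (i, j) \<in> I"
    using m_ex I_iff uniq by metis
  obtain v where v: "V2_mm A1 A2 u1 u2 = {v}" using h1' by blast
  have mv: "m i = v" if "i \<in> A1" for i
  proof -
    obtain j where j: "j \<in> A2" "u2 i j = m i" using m_ex by blast
    then have ij: "(i,j) \<in> I" using I_iff that by auto
    have "expu A1 A2 u2 (pure i) (pure j) \<in> V2_mm A1 A2 u1 u2"
      unfolding V2_mm_def using nashI[OF ij] by force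
    then show ?thesis using v j expu_pure1[OF fin1 that, of A2 u2 "pure j"] sum_pure[OF fin2 j(1), of "u2 i"] by simp
  qed
  have partC: "(\<forall>(i, j) \<in> I. u2 i j = v) \<and> (\<forall>(i', j') \<in> (A1 \<times> A2) - I. u2 i' j' < v)"
    using I_iff mv m_ge by (auto simp: less_le) (metis m_ge mv)
  have key: "\<exists>i j. (i,j) \<in> I \<and> x = u1 i j" if x: "x \<in> V1_mm A1 A2 u1 u2" for x
  proof -
    obtain \<sigma>1 \<sigma>2 where N: "(\<sigma>1,\<sigma>2) \<in> nash_mm A1 A2 u1 u2" and xe: "x = expu A1 A2 u1 \<sigma>1 \<sigma>2"
      using x unfolding V1_mm_def by auto
    have m1: "mixed A1 \<sigma>1" and m2: "mixed A2 \<sigma>2" using N unfolding nash_mm_def by auto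
    have nn1: "\<sigma>1 a \<ge> 0" for a using m1 unfolding mixed_def by auto
    have nn2: "\<sigma>2 a \<ge> 0" for a using m2 unfolding mixed_def by auto
    have s1: "(\<Sum>a\<in>A1. \<sigma>1 a) = 1" using m1 unfolding mixed_def by auto
    have s2: "(\<Sum>a\<in>A2. \<sigma>2 a) = 1" using m2 unfolding mixed_def by auto
    have prod1: "(\<Sum>a1\<in>A1. \<Sum>a2\<in>A2. \<sigma>1 a1 * \<sigma>2 a2 * c) = c" for c
    proof -
      have "(\<Sum>a1\<in>A1. \<Sum>a2\<in>A2. \<sigma>1 a1 * \<sigma>2 a2 * c) = (\<Sum>a1\<in>A1. \<sigma>1 a1 * c * (\<Sum>a2\<in>A2. \<sigma>2 a2))"
        by (simp add: sum_distrib_left mult_ac)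
      also have "\<dots> = c" using s1 s2 by (simp add: sum_distrib_right[symmetric])
      finally show ?thesis .
    qed
    have ev: "expu A1 A2 u2 \<sigma>1 \<sigma>2 = v" using v N unfolding V2_mm_def by force
    have "(\<Sum>a1\<in>A1. \<Sum>a2\<in>A2. \<sigma>1 a1 * \<sigma>2 a2 * (v - u2 a1 a2)) = 0"
      using ev prod1[of v] unfolding expu_def
      by (simp add: right_diff_distrib sum_subtractf)
    moreover have tnn: "\<sigma>1 a1 * \<sigma>2 a2 * (v - u2 a1 a2) \<ge> 0" if "a1 \<in> A1" "a2 \<in> A2" for a1 a2
      using nn1 nn2 m_ge[OF that(2), of a1] mv[OF that(1)] by simp
    ultimately have z: "\<sigma>1 a1 * \<sigma>2 a2 * (v - u2 a1 a2) = 0" if "a1 \<in> A1" "a2 \<in> A2" for a1 a2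
      using that fin1 fin2
      by (simp add: sum_nonneg sum_nonneg_eq_0_iff) blast
    have inI: "(a1,a2) \<in> I" if "a1 \<in> A1" "a2 \<in> A2" "\<sigma>1 a1 > 0" "\<sigma>2 a2 > 0" for a1 a2
      using z[OF that(1,2)] that I_iff mv by auto
    obtain i0 where i0: "i0 \<in> A1" "\<sigma>1 i0 > 0" using mixed_pos[OF m1] by blast
    obtain j0 where j0: "j0 \<in> A2" "\<sigma>2 j0 > 0" using mixed_pos[OF m2] by blast
    have I0: "(i0,j0) \<in> I" using inI i0 j0 by auto
    have "\<sigma>1 a1 * \<sigma>2 a2 * u1 a1 a2 = \<sigma>1 a1 * \<sigma>2 a2 * u1 i0 j0" if "a1 \<in> A1" "a2 \<in> A2" for a1 a2
    proof (cases "\<sigma>1 a1 > 0 \<and> \<sigma>2 a2 > 0")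
      case True
      have "a2 = j0" using uniq inI[OF i0(1) that(2) i0(2)] True I0 by blast
      then have "(a1,j0) \<in> I" using inI that True by auto
      then have "u1 a1 j0 = u1 i0 j0" using h2' I0 that i0 by (meson order_antisym)
      then show ?thesis using \<open>a2 = j0\<close> by simp
    next
      case False
      then have "\<sigma>1 a1 = 0 \<or> \<sigma>2 a2 = 0" using nn1[of a1] nn2[of a2] by auto
      then show ?thesis by auto
    qed
    then have "(\<Sum>a1\<in>A1. \<Sum>a2\<in>A2. \<sigma>1 a1 * \<sigma>2 a2 * u1 a1 a2) = (\<Sum>a1\<in>A1. \<Sum>a2\<in>A2. \<sigma>1 a1 * \<sigma>2 a2 * u1 i0 j0)"
      by (intro sum.cong refl) auto
    then have "x = u1 i0 j0" unfolding xe expu_def using prod1[of "u1 i0 j0"] by simp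
    then show ?thesis using I0 by blast
  qed
  have partD: "\<exists>(i, j) \<in> I. \<exists>(i', j') \<in> I. u1 i j \<noteq> u1 i' j' \<and> i \<noteq> i' \<and> j \<noteq> j'"
  proof -
    obtain x y where "x \<in> V1_mm A1 A2 u1 u2" "y \<in> V1_mm A1 A2 u1 u2" "x \<noteq> y" using h1 by blast
    then obtain i j i' j' where a: "(i,j) \<in> I" "(i',j') \<in> I" "u1 i j \<noteq> u1 i' j'"
      using key by metis
    have "i \<noteq> i'" using uniq a by blast
    moreover have "j \<noteq> j'"
    proof
      assume "j = j'"
      then show False using h2' a I_iff by (meson order_antisym)
    qed
    ultimately show ?thesis using a by blast
  qed
  show ?thesis using nashI partB partC partD unfolding I_def by blast
qed

end
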